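(* Let $G$ be a finite simple graph with an initial configuration and let $u,v$ be adjacent vertices with $\deg(u)=2$ and $\deg(v)\in\{1,2\}$. Then for every integer $t\geq0$, $|c_{t+1}(u)-c_{t+1}(v)|\leq \max\{3,\ |c_t(u)-c_t(v)|\}$.
   Context: Diffusion process: for a configuration $c_t:V(G)\to\mathbb{Z}$, $c_{t+1}(w)=c_t(w)-|\{x\in N(w): c_t(w)>c_t(x)\}|+|\{x\in N(w): c_t(w)<c_t(x)\}|$ for all $w$ simultaneously. *)

theory Defs
  imports Main
begin

definition simple_graph :: "'a set \<Rightarrow> ('a \<Rightarrow> 'a \<Rightarrow> bool) \<Rightarrow> bool" where
  "simple_graph V E \<longleftrightarrow> finite V \<and> (\<forall>x y. E x y \<longrightarrow> x \<in> V \<and> y \<in> V)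
     \<and> (\<forall>x y. E x y \<longrightarrow> E y x) \<and> (\<forall>x. \<not> E x x)"

definition nbhd :: "'a set \<Rightarrow> ('a \<Rightarrow> 'a \<Rightarrow> bool) \<Rightarrow> 'a \<Rightarrow> 'a set" where
  "nbhd V E w = {x \<in> V. E w x}"

definition degree :: "'a set \<Rightarrow> ('a \<Rightarrow> 'a \<Rightarrow> bool) \<Rightarrow> 'a \<Rightarrow> nat" where
  "degree V E w = card (nbhd V E w)"

definition diffusion_step :: "'a set \<Rightarrow> ('a \<Rightarrow> 'a \<Rightarrow> bool) \<Rightarrow> ('a \<Rightarrow> int) \<Rightarrow> ('a \<Rightarrow> int)" where
  "diffusion_step V E c = (\<lambda>w. c w
      - int (card {x \<in> nbhd V E w. c w > c x})
      + int (card {x \<in> nbhd V E w. c w < c x}))"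

definition config :: "'a set \<Rightarrow> ('a \<Rightarrow> 'a \<Rightarrow> bool) \<Rightarrow> ('a \<Rightarrow> int) \<Rightarrow> nat \<Rightarrow> ('a \<Rightarrow> int)" where
  "config V E c0 t = (diffusion_step V E ^^ t) c0"

end

theory Submission
  imports Defs
begin

lemma card_filter2: assumes "v \<noteq> a" shows "card {x \<in> {v,a}. P x} = (if P v then 1 else 0) + (if P a then 1 else 0)"
proof -
  have "{x \<in> {v,a}. P x} = (if P v then {v} else {}) \<union> (if P a then {a} else {})" by auto
  then show ?thesis using assms by auto
qed

lemma card_filter1: "card {x \<in> {v}. P x} = (if P v then 1 else 0)"
proof -
  have "{x \<in> {v}. P x} = (if P v then {v} else {})" by auto
  then show ?thesis by simp
qed

lemma nb2:
  assumes "finite V" "card (nbhd V E u) = 2" "v \<in> nbhd V E u"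
  obtains a where "nbhd V E u = {v, a}" "a \<noteq> v"
proof -
  have f: "finite (nbhd V E u)" using assms(1) by (simp add: nbhd_def)
  have "card (nbhd V E u - {v}) = 1" using assms f by simp
  then obtain a where "nbhd V E u - {v} = {a}" by (metis card_1_singletonE)
  then have "nbhd V E u = {v, a}" "a \<noteq> v" using assms(3) by blast+
  then show ?thesis using that by blast
qed

lemma nb1:
  assumes "finite V" "card (nbhd V E u) = 1" "v \<in> nbhd V E u"
  shows "nbhd V E u = {v}"
  using assms by (metis card_1_singletonE singletonD)

theorem lemma6:
  fixes V :: "'a set" and E :: "'a \<Rightarrow> 'a \<Rightarrow> bool" and c0 :: "'a \<Rightarrow> int"
    and u v :: 'a and t :: nat
  assumes "simple_graph V E"
    and "E u v"
    and "degree V E u = 2"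
    and "degree V E v \<in> {1, 2}"
  shows "\<bar>config V E c0 (Suc t) u - config V E c0 (Suc t) v\<bar>
           \<le> max 3 \<bar>config V E c0 t u - config V E c0 t v\<bar>"
proof -
  define c where "c = config V E c0 t"
  have step: "config V E c0 (Suc t) = diffusion_step V E c"
    by (simp add: c_def config_def)
  have fin: "finite V" and sym: "E v u" and uV: "u \<in> V" and vV: "v \<in> V"
    using assms(1,2) by (auto simp: simple_graph_def)
  have vin: "v \<in> nbhd V E u" using vV assms(2) by (simp add: nbhd_def)
  have uin: "u \<in> nbhd V E v" using uV sym by (simp add: nbhd_def)
  obtain a where A: "nbhd V E u = {v, a}" "a \<noteq> v"
    using nb2[OF fin _ vin] assms(3) by (auto simp: degree_def)
  have U: "diffusion_step V E c u = c u
      - ((if c u > c v then 1 else 0) + (if c u > c a then 1 else 0))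
      + ((if c u < c v then 1 else 0) + (if c u < c a then 1 else 0))"
    unfolding diffusion_step_def A card_filter2[OF A(2)[symmetric]] by simp
  show ?thesis
  proof (cases "degree V E v = 1")
    case True
    have B: "nbhd V E v = {u}" using nb1[OF fin _ uin] True by (simp add: degree_def)
    have W: "diffusion_step V E c v = c v
      - (if c v > c u then 1 else 0) + (if c v < c u then 1 else 0)"
      unfolding diffusion_step_def B card_filter1 by simp
    show ?thesis unfolding step c_def[symmetric] U W by (simp add: abs_if max_def split: if_splits)
  next
    case False
    then have "degree V E v = 2" using assms(4) by simp
    then obtain b where B: "nbhd V E v = {u, b}" "b \<noteq> u"
      using nb2[OF fin _ uin] by (auto simp: degree_def)
    have W: "diffusion_step V E c v = c v
      - ((if c v > c u then 1 else 0) + (if c v > c b then 1 else 0))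
      + ((if c v < c u then 1 else 0) + (if c v < c b then 1 else 0))"
      unfolding diffusion_step_def B card_filter2[OF B(2)[symmetric]] by simp
    show ?thesis unfolding step c_def[symmetric] U W by (simp add: abs_if max_def split: if_splits)
  qed
qed

end
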